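(* Let $G$ be a group with a surjective homomorphism $f\colon G\to\mathbb{Z}$ with kernel $N$. If $N$ is not finitely generated, then no lexicographic left-order on $G$ where $\mathbb{Z}$ leads is regular.
   Context: A positive cone of a group $H$ is a subsemigroup $P$ with $H=P\sqcup P^{-1}\sqcup\{1\}$. A lexicographic left-order on $G$ where $\mathbb{Z}$ leads is one with positive cone $f^{-1}(P_{\mathbb{Z}})\cup P_N$ for a positive cone $P_{\mathbb{Z}}$ of $\mathbb{Z}$ and a positive cone $P_N$ of $N$. A left-order is regular if $G$ is finitely generated and there are a finite set $X$, a surjective monoid homomorphism $\pi\colon X^*\to G$ and a language $\mathcal{L}\subseteq X^*$ accepted by a finite state automaton with $\pi(\mathcal{L})$ equal to the positive cone. *)

theory Defs
  imports "HOL-Algebra.Algebra"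
begin

definition positive_cone :: "('a, 'b) monoid_scheme \<Rightarrow> 'a set \<Rightarrow> 'a set \<Rightarrow> bool" where
  "positive_cone G H P \<longleftrightarrow>
     P \<subseteq> H \<and>
     (\<forall>a\<in>P. \<forall>b\<in>P. a \<otimes>\<^bsub>G\<^esub> b \<in> P) \<and>
     H = P \<union> (\<lambda>x. inv\<^bsub>G\<^esub> x) ` P \<union> {\<one>\<^bsub>G\<^esub>} \<and>
     P \<inter> (\<lambda>x. inv\<^bsub>G\<^esub> x) ` P = {} \<and>
     \<one>\<^bsub>G\<^esub> \<notin> P \<and> \<one>\<^bsub>G\<^esub> \<notin> (\<lambda>x. inv\<^bsub>G\<^esub> x) ` P"

text \<open>Positive cone of the lexicographic left-order on G where Z leads.\<close>
definition lex_cone :: "('a, 'b) monoid_scheme \<Rightarrow> ('a \<Rightarrow> int) \<Rightarrow> int set \<Rightarrow> 'a set \<Rightarrow> 'a set" where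
  "lex_cone G f PZ PN = {g \<in> carrier G. f g \<in> PZ} \<union> PN"

definition finitely_generated_group :: "('a, 'b) monoid_scheme \<Rightarrow> bool" where
  "finitely_generated_group G \<longleftrightarrow>
     (\<exists>S. finite S \<and> S \<subseteq> carrier G \<and> generate G S = carrier G)"

definition free_monoid_hom :: "('a, 'b) monoid_scheme \<Rightarrow> 'x set \<Rightarrow> ('x list \<Rightarrow> 'a) \<Rightarrow> bool" where
  "free_monoid_hom G A h \<longleftrightarrow>
     (\<forall>w\<in>lists A. h w \<in> carrier G) \<and>
     h [] = \<one>\<^bsub>G\<^esub> \<and>
     (\<forall>u\<in>lists A. \<forall>v\<in>lists A. h (u @ v) = h u \<otimes>\<^bsub>G\<^esub> h v)"

definition dfa_run :: "('q \<Rightarrow> 'x \<Rightarrow> 'q) \<Rightarrow> 'q \<Rightarrow> 'x list \<Rightarrow> 'q" where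
  "dfa_run \<delta> q w = foldl \<delta> q w"

definition fsa_accepted :: "'x set \<Rightarrow> 'x list set \<Rightarrow> bool" where
  "fsa_accepted A L \<longleftrightarrow>
     (\<exists>(Q :: nat set) q0 \<delta> F.
        finite Q \<and> q0 \<in> Q \<and> F \<subseteq> Q \<and>
        (\<forall>q\<in>Q. \<forall>x\<in>A. \<delta> q x \<in> Q) \<and>
        L = {w \<in> lists A. dfa_run \<delta> q0 w \<in> F})"

definition regular_cone :: "('a, 'b) monoid_scheme \<Rightarrow> 'a set \<Rightarrow> bool" where
  "regular_cone G P \<longleftrightarrow>
     finitely_generated_group G \<and>
     (\<exists>(A :: nat set) h L.
        finite A \<and> free_monoid_hom G A h \<and> h ` lists A = carrier G \<and>
        L \<subseteq> lists A \<and> fsa_accepted A L \<and> h ` L = P)"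

end

theory Submission
  imports Defs
begin

lemma foldl_in_Q:
  assumes "\<forall>q\<in>Q. \<forall>x\<in>A. \<delta> q x \<in> Q"
  shows "q \<in> Q \<Longrightarrow> u \<in> lists A \<Longrightarrow> foldl \<delta> q u \<in> Q"
  using assms by (induction u arbitrary: q) auto

theorem lemma3p11:
  fixes G :: "('a, 'b) monoid_scheme" and f :: "'a \<Rightarrow> int"
  assumes "group G"
    and "f \<in> hom G integer_group"
    and "f ` carrier G = UNIV"
    and "\<not> (\<exists>S. finite S \<and> S \<subseteq> kernel G integer_group f \<and>
                 generate G S = kernel G integer_group f)"
  shows "\<forall>PZ PN. positive_cone integer_group UNIV PZ \<and>
                positive_cone G (kernel G integer_group f) PN
                \<longrightarrow> \<not> regular_cone G (lex_cone G f PZ PN)"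
proof (intro allI impI notI)
  fix PZ PN
  assume cones: "positive_cone integer_group UNIV PZ \<and> positive_cone G (kernel G integer_group f) PN"
     and reg: "regular_cone G (lex_cone G f PZ PN)"
  interpret G: group G by fact
  interpret fh: group_hom G integer_group f
    by (rule group_hom.intro[OF assms(1) group_integer_group]) (simp add: group_hom_axioms_def assms(2))
  define N where "N = kernel G integer_group f"
  have Nsub: "subgroup N G" unfolding N_def by (rule fh.subgroup_kernel)
  have Nf: "N = {x \<in> carrier G. f x = 0}" by (simp add: kernel_def N_def)
  have fmult: "\<And>a b. a \<in> carrier G \<Longrightarrow> b \<in> carrier G \<Longrightarrow> f (a \<otimes>\<^bsub>G\<^esub> b) = f a + f b"
    using fh.hom_mult by simp
  have finv: "\<And>a. a \<in> carrier G \<Longrightarrow> f (inv\<^bsub>G\<^esub> a) = - f a"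
    using fh.hom_inv by simp
  have PNsub: "PN \<subseteq> N" and Neq: "N = PN \<union> (\<lambda>x. inv\<^bsub>G\<^esub> x) ` PN \<union> {\<one>\<^bsub>G\<^esub>}"
    using cones unfolding positive_cone_def N_def by auto
  have PZdisj: "PZ \<inter> uminus ` PZ = {}"
    using cones unfolding positive_cone_def by simp
  obtain A :: "nat set" and h L where A: "finite A" and hom: "free_monoid_hom G A h"
    and surj: "h ` lists A = carrier G" and LA: "L \<subseteq> lists A" and acc: "fsa_accepted A L"
    and hL: "h ` L = lex_cone G f PZ PN"
    using reg unfolding regular_cone_def by blast
  obtain Q :: "nat set" and q0 \<delta> F where Qfin: "finite Q" and q0: "q0 \<in> Q" and FQ: "F \<subseteq> Q"
    and dQ: "\<forall>q\<in>Q. \<forall>x\<in>A. \<delta> q x \<in> Q" and Ldef: "L = {w \<in> lists A. dfa_run \<delta> q0 w \<in> F}"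
    using acc unfolding fsa_accepted_def by blast
  have hcarr: "\<And>w. w \<in> lists A \<Longrightarrow> h w \<in> carrier G"
    using hom unfolding free_monoid_hom_def by blast
  have happ: "\<And>u v. u \<in> lists A \<Longrightarrow> v \<in> lists A \<Longrightarrow> h (u @ v) = h u \<otimes>\<^bsub>G\<^esub> h v"
    using hom unfolding free_monoid_hom_def by blast
  define n where "n = card Q"
  define W where "W = {w. set w \<subseteq> A \<and> length w \<le> n}"
  define S where "S = (\<lambda>(x,y). h x \<otimes>\<^bsub>G\<^esub> h y \<otimes>\<^bsub>G\<^esub> inv\<^bsub>G\<^esub> (h x)) ` {(x,y). x \<in> W \<and> y \<in> W \<and> f (h y) = 0}
      \<union> h ` {w \<in> W. f (h w) = 0}"
  have Wfin: "finite W" unfolding W_def using finite_lists_length_le[OF A] .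
  have "finite {(x,y). x \<in> W \<and> y \<in> W \<and> f (h y) = 0}"
    by (rule finite_subset[of _ "W \<times> W"]) (use Wfin in auto)
  then have Sfin: "finite S" unfolding S_def using Wfin by auto
  have WA: "\<And>w. w \<in> W \<Longrightarrow> w \<in> lists A" unfolding W_def by auto
  have SN: "S \<subseteq> N"
  proof
    fix s assume "s \<in> S"
    then show "s \<in> N"
    proof (unfold S_def, elim UnE imageE)
      fix p assume p: "p \<in> {(x,y). x \<in> W \<and> y \<in> W \<and> f (h y) = 0}"
        and s: "s = (\<lambda>(x,y). h x \<otimes>\<^bsub>G\<^esub> h y \<otimes>\<^bsub>G\<^esub> inv\<^bsub>G\<^esub> (h x)) p"
      obtain x y where xy: "p = (x,y)" by (cases p)
      have x: "h x \<in> carrier G" and y: "h y \<in> carrier G" and fy: "f (h y) = 0"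
        using p xy WA hcarr by auto
      show "s \<in> N" using s xy x y fy by (simp add: Nf fmult finv)
    next
      fix w assume "w \<in> {w \<in> W. f (h w) = 0}" "s = h w"
      then show "s \<in> N" using WA hcarr by (auto simp: Nf)
    qed
  qed
  have SG: "S \<subseteq> carrier G" using SN Nf by auto
  have Lsign: "\<And>w. w \<in> L \<Longrightarrow> f (h w) \<in> PZ \<or> f (h w) = 0"
  proof -
    fix w assume "w \<in> L"
    then have "h w \<in> lex_cone G f PZ PN" using hL by blast
    then show "f (h w) \<in> PZ \<or> f (h w) = 0" using PNsub Nf unfolding lex_cone_def by auto
  qed
  have run_app: "\<And>q u v. dfa_run \<delta> q (u @ v) = dfa_run \<delta> (dfa_run \<delta> q u) v"
    by (simp add: dfa_run_def)
  have key: "\<And>w. w \<in> L \<Longrightarrow> f (h w) = 0 \<Longrightarrow> h w \<in> generate G S"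
  proof -
    fix w
    show "w \<in> L \<Longrightarrow> f (h w) = 0 \<Longrightarrow> h w \<in> generate G S"
    proof (induction "length w" arbitrary: w rule: less_induct)
      case less
      have wA: "w \<in> lists A" using less.prems LA by blast
      show ?case
      proof (cases "length w \<le> n")
        case True
        then have "h w \<in> S" unfolding S_def W_def using wA less.prems by auto
        then show ?thesis by (rule generate.incl)
      next
        case False
        define s where "s i = dfa_run \<delta> q0 (take i w)" for i
        have sQ: "s ` {0..n} \<subseteq> Q"
          using foldl_in_Q[OF dQ q0] wA unfolding s_def dfa_run_def
          by (auto simp: in_lists_conv_set dest: in_set_takeD)
        have "\<not> inj_on s {0..n}"
        proof
          assume "inj_on s {0..n}"
          from card_inj_on_le[OF this sQ Qfin] show False by (simp add: n_def)
        qed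
        then obtain i j where ij: "i \<in> {0..n}" "j \<in> {0..n}" "i \<noteq> j" "s i = s j"
          unfolding inj_on_def by blast
        then obtain i j where ij: "i < j" "j \<le> n" "s i = s j"
          by (metis atLeastAtMost_iff linorder_neqE_nat)
        define x where "x = take i w"
        define y where "y = drop i (take j w)"
        define z where "z = drop j w"
        have txy: "take j w = x @ y" unfolding x_def y_def
          using ij by (metis append_take_drop_id take_take min.absorb1 less_imp_le)
        have wxyz: "w = x @ y @ z" unfolding z_def
          using txy by (metis append.assoc append_take_drop_id)
        have xA: "x \<in> lists A" and yA: "y \<in> lists A" and zA: "z \<in> lists A"
          using wA wxyz by auto
        have yne: "y \<noteq> []" unfolding y_def using ij False by simp
        have xW: "x \<in> W" unfolding W_def x_def using ij wA by (auto simp: in_lists_conv_set dest: in_set_takeD)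
        have yW: "y \<in> W" unfolding W_def y_def using ij wA
          by (auto simp: in_lists_conv_set dest: in_set_takeD in_set_dropD)
        have runx: "dfa_run \<delta> q0 x = s i" by (simp add: s_def x_def)
        have runxy: "dfa_run \<delta> q0 (x @ y) = s j" by (simp add: s_def txy)
        have loop: "dfa_run \<delta> (s i) y = s i" using runx runxy run_app ij(3) by metis
        have wF: "dfa_run \<delta> q0 w \<in> F" using less.prems Ldef by blast
        have runw: "dfa_run \<delta> q0 w = dfa_run \<delta> (s i) z"
          using wxyz run_app runx loop by metis
        have xzL: "x @ z \<in> L"
        proof -
          have "dfa_run \<delta> q0 (x @ z) = dfa_run \<delta> (s i) z" using run_app runx by metis
          then show ?thesis using Ldef wF runw xA zA by auto
        qed
        have xyyzL: "x @ y @ y @ z \<in> L"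
        proof -
          have "dfa_run \<delta> q0 (x @ y @ y @ z) = dfa_run \<delta> (s i) z" using run_app runx loop by metis
          then show ?thesis using Ldef wF runw xA yA zA by auto
        qed
        have hx: "h x \<in> carrier G" and hy: "h y \<in> carrier G" and hz: "h z \<in> carrier G"
          using xA yA zA hcarr by auto
        have hw: "h w = h x \<otimes>\<^bsub>G\<^esub> (h y \<otimes>\<^bsub>G\<^esub> h z)"
          using wxyz happ xA yA zA by (metis append_in_lists_conv)
        have hxz: "h (x @ z) = h x \<otimes>\<^bsub>G\<^esub> h z" using happ xA zA by blast
        have hxyyz: "h (x @ y @ y @ z) = h x \<otimes>\<^bsub>G\<^esub> (h y \<otimes>\<^bsub>G\<^esub> (h y \<otimes>\<^bsub>G\<^esub> h z))"
          using happ xA yA zA by (metis append_in_lists_conv)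
        have fw: "f (h x) + f (h y) + f (h z) = 0" using less.prems hw hx hy hz by (simp add: fmult)
        have fxz: "f (h (x @ z)) = - f (h y)" using fw hxz hx hz by (simp add: fmult)
        have fxyyz: "f (h (x @ y @ y @ z)) = f (h y)" using fw hxyyz hx hy hz by (simp add: fmult)
        have fy0: "f (h y) = 0"
        proof (rule ccontr)
          assume ne: "f (h y) \<noteq> 0"
          have "f (h y) \<in> PZ" using Lsign[OF xyyzL] fxyyz ne by simp
          moreover have "- f (h y) \<in> PZ" using Lsign[OF xzL] fxz ne by simp
          ultimately show False using PZdisj by (metis disjoint_iff image_eqI)
        qed
        have "length (x @ z) < length w" using wxyz yne by simp
        then have IH: "h (x @ z) \<in> generate G S" using less.hyps xzL fxz fy0 by simp
        have conjS: "h x \<otimes>\<^bsub>G\<^esub> h y \<otimes>\<^bsub>G\<^esub> inv\<^bsub>G\<^esub> (h x) \<in> S"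
          unfolding S_def using xW yW fy0
          by (intro UnI1 image_eqI[where x="(x,y)"]) auto
        have "h w = (h x \<otimes>\<^bsub>G\<^esub> h y \<otimes>\<^bsub>G\<^esub> inv\<^bsub>G\<^esub> (h x)) \<otimes>\<^bsub>G\<^esub> h (x @ z)"
          using hw hxz hx hy hz by (simp add: G.m_assoc G.l_inv G.m_assoc[symmetric, of "inv\<^bsub>G\<^esub> (h x)" "h x"])
        then show ?thesis using IH generate.eng generate.incl[OF conjS] by metis
      qed
    qed
  qed
  have PNgen: "PN \<subseteq> generate G S"
  proof
    fix p assume p: "p \<in> PN"
    then have "p \<in> h ` L" using hL unfolding lex_cone_def by blast
    then obtain w where w: "w \<in> L" "p = h w" by blast
    have "f (h w) = 0" using p w PNsub Nf by auto
    then show "p \<in> generate G S" using key w by blast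
  qed
  have gsub: "subgroup (generate G S) G" using G.generate_is_subgroup[OF SG] .
  have "N \<subseteq> generate G S"
    using Neq PNgen subgroup.m_inv_closed[OF gsub] subgroup.one_closed[OF gsub] by blast
  moreover have "generate G S \<subseteq> N" using G.generate_subgroup_incl[OF SN Nsub] .
  ultimately have "generate G S = N" by blast
  then show False using assms(4) Sfin SN unfolding N_def by blast
qed

end
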